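(* Let $v:\mathbb{R}/\mathbb{Z}\to\mathbb{R}$ be real analytic, $\alpha\in\mathbb{R}\setminus\mathbb{Q}$, $x\in\mathbb{R}$, $E\in\mathbb{R}$, and $A=A^{(E-v)}$. There is a constant $C>0$, independent of $k$, $\epsilon$, $x$, $E$ and $v$, such that for every integer $k\ge1$: if $\epsilon>0$ satisfies $\det P_{(k)}=\frac{1}{4\epsilon^2}$, then $$C^{-1}<\frac{\psi(m^+(E+i\epsilon))}{2\epsilon\|P_{(k)}\|}<C.$$
   Context: $A^{(E-v)}(y)=\begin{pmatrix}E-v(y)&-1\\1&0\end{pmatrix}$, $A_n(y)=A(y+(n-1)\alpha)\cdots A(y)$ for $n\ge1$, and $P_{(k)}=\sum_{j=1}^k A_{2j-1}(x+\alpha)^*A_{2j-1}(x+\alpha)$ (a positive self-adjoint $2\times2$ matrix). $H=H_{v,\alpha,x}$ is the operator $(Hu)_n=u_{n+1}+u_{n-1}+v(x+n\alpha)u_n$ on $\ell^2(\mathbb{Z})$. For $z=E+i\epsilon$, $\epsilon>0$, let $u^+$ be a nonzero solution of $Hu^+=zu^+$ (as a formal difference equation) which is square summable at $+\infty$ (unique up to normalization), and $m^+(z)=-u^+_1/u^+_0$; it lies in the upper half plane $\mathbb{H}$. For $t\in\mathbb{R}$ let $R_t=\begin{pmatrix}\cos2\pi t&-\sin2\pi t\\\sin2\pi t&\cos2\pi t\end{pmatrix}$, acting on $\mathbb{H}$ by Möbius transformations $\begin{pmatrix}a&b\\c&d\end{pmatrix}\cdot z=\frac{az+b}{cz+d}$;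 for $z\in\mathbb{H}$ set $z_\beta=R_{-\beta/2\pi}\cdot z$ and $\psi(z)=\sup_\beta|z_\beta|$. *)

theory Defs
  imports "HOL-Analysis.Analysis"
begin

definition real_analytic :: "(real \<Rightarrow> real) \<Rightarrow> bool" where
  "real_analytic f \<longleftrightarrow>
     (\<forall>y. \<exists>r>0. \<exists>c :: nat \<Rightarrow> real. \<forall>t. \<bar>t - y\<bar> < r \<longrightarrow> (\<lambda>n. c n * (t - y) ^ n) sums f t)"

text \<open>A function on R/Z, viewed as a 1-periodic function on R.\<close>
definition periodic1 :: "(real \<Rightarrow> real) \<Rightarrow> bool" where
  "periodic1 f \<longleftrightarrow> (\<forall>y. f (y + 1) = f y)"

definition schr_A :: "(real \<Rightarrow> real) \<Rightarrow> real \<Rightarrow> real \<Rightarrow> real^2^2" where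
  "schr_A v E y = (\<chi> i j. if i = 1 \<and> j = 1 then E - v y
                        else if i = 1 \<and> j = 2 then -1
                        else if i = 2 \<and> j = 1 then 1 else 0)"

fun transfer :: "(real \<Rightarrow> real) \<Rightarrow> real \<Rightarrow> real \<Rightarrow> nat \<Rightarrow> real \<Rightarrow> real^2^2" where
  "transfer v E \<alpha> 0 y = mat 1"
| "transfer v E \<alpha> (Suc n) y = schr_A v E (y + real n * \<alpha>) ** transfer v E \<alpha> n y"

definition Pk :: "(real \<Rightarrow> real) \<Rightarrow> real \<Rightarrow> real \<Rightarrow> real \<Rightarrow> nat \<Rightarrow> real^2^2" where
  "Pk v E \<alpha> x k = (\<Sum>j\<in>{1..k}. transpose (transfer v E \<alpha> (2*j - 1) (x + \<alpha>))
                                   ** transfer v E \<alpha> (2*j - 1) (x + \<alpha>))"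

definition mat_opnorm :: "real^2^2 \<Rightarrow> real" where
  "mat_opnorm M = onorm (\<lambda>w. M *v w)"

definition is_eigensol :: "(real \<Rightarrow> real) \<Rightarrow> real \<Rightarrow> real \<Rightarrow> complex \<Rightarrow> (int \<Rightarrow> complex) \<Rightarrow> bool" where
  "is_eigensol v \<alpha> x z u \<longleftrightarrow>
     (\<forall>n::int. u (n + 1) + u (n - 1) + complex_of_real (v (x + real_of_int n * \<alpha>)) * u n = z * u n)"

definition l2_at_plus_infty :: "(int \<Rightarrow> complex) \<Rightarrow> bool" where
  "l2_at_plus_infty u \<longleftrightarrow> summable (\<lambda>n::nat. (cmod (u (int n)))\<^sup>2)"

definition m_plus :: "(real \<Rightarrow> real) \<Rightarrow> real \<Rightarrow> real \<Rightarrow> complex \<Rightarrow> complex" where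
  "m_plus v \<alpha> x z = (THE m. \<exists>u. u \<noteq> (\<lambda>_. 0) \<and> is_eigensol v \<alpha> x z u \<and> l2_at_plus_infty u
                                \<and> m = - u 1 / u 0)"

definition moebius :: "real^2^2 \<Rightarrow> complex \<Rightarrow> complex" where
  "moebius M z = (of_real (M$1$1) * z + of_real (M$1$2)) / (of_real (M$2$1) * z + of_real (M$2$2))"

definition rot :: "real \<Rightarrow> real^2^2" where
  "rot t = (\<chi> i j. if i = 1 \<and> j = 1 then cos (2*pi*t)
                 else if i = 1 \<and> j = 2 then - sin (2*pi*t)
                 else if i = 2 \<and> j = 1 then sin (2*pi*t) else cos (2*pi*t))"

definition psi :: "complex \<Rightarrow> real" where
  "psi z = (SUP \<beta>\<in>(UNIV::real set). cmod (moebius (rot (- \<beta> / (2*pi))) z))"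

end

theory Submission
  imports Defs
begin

fun rsol :: "(nat \<Rightarrow> 'a::comm_ring_1) \<Rightarrow> 'a \<Rightarrow> 'a \<Rightarrow> nat \<Rightarrow> 'a" where
  "rsol c a0 a1 0 = a0"
| "rsol c a0 a1 (Suc 0) = a1"
| "rsol c a0 a1 (Suc (Suc n)) = c (Suc n) * rsol c a0 a1 (Suc n) - rsol c a0 a1 n"

lemma rsol_rec: "n \<ge> 1 \<Longrightarrow> rsol c a0 a1 (Suc n) = c n * rsol c a0 a1 n - rsol c a0 a1 (n - 1)"
  by (cases n) auto

lemma transfer_entries:
  "transfer v E \<alpha> n (x + \<alpha>) $ 1 $ 1 = rsol (\<lambda>j. E - v (x + real j * \<alpha>)) 0 1 (Suc n) \<and>
   transfer v E \<alpha> n (x + \<alpha>) $ 2 $ 1 = rsol (\<lambda>j. E - v (x + real j * \<alpha>)) 0 1 n \<and>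
   transfer v E \<alpha> n (x + \<alpha>) $ 1 $ 2 = rsol (\<lambda>j. E - v (x + real j * \<alpha>)) 1 0 (Suc n) \<and>
   transfer v E \<alpha> n (x + \<alpha>) $ 2 $ 2 = rsol (\<lambda>j. E - v (x + real j * \<alpha>)) 1 0 n"
proof (induction n)
  case 0
  then show ?case by (simp add: mat_def)
next
  case (Suc n)
  have e: "x + \<alpha> + real n * \<alpha> = x + real (Suc n) * \<alpha>" by (simp add: algebra_simps)
  show ?case using Suc
    by (simp add: matrix_matrix_mult_def sum_2 schr_A_def e del: rsol.simps(3))
      (simp add: rsol_rec[of "Suc n"] algebra_simps)
qed


lemma sum_pairs: "(\<Sum>j\<in>{1..(k::nat)}. f (2*j) + f (2*j - 1)) = (\<Sum>n\<in>{1..2*k}. (f n :: 'a::comm_monoid_add))"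
proof (induction k)
  case 0 then show ?case by simp
next
  case (Suc k)
  have "{1..2 * Suc k} = insert (Suc (Suc (2*k))) (insert (Suc (2*k)) {1..2*k})" by auto
  then show ?case using Suc by (simp add: add.commute add.left_commute)
qed

definition phiE :: "(real\<Rightarrow>real) \<Rightarrow> real \<Rightarrow> real \<Rightarrow> real \<Rightarrow> nat \<Rightarrow> real" where "phiE v E \<alpha> x = rsol (\<lambda>j. E - v (x + real j * \<alpha>)) 0 1"
definition thetaE :: "(real\<Rightarrow>real) \<Rightarrow> real \<Rightarrow> real \<Rightarrow> real \<Rightarrow> nat \<Rightarrow> real" where "thetaE v E \<alpha> x = rsol (\<lambda>j. E - v (x + real j * \<alpha>)) 1 0"

lemma Pk_entries:
  fixes v E \<alpha> x k
  defines "f1 \<equiv> phiE v E \<alpha> x" and "f2 \<equiv> thetaE v E \<alpha> x"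
  shows "Pk v E \<alpha> x k $ 1 $ 1 = (\<Sum>n\<in>{1..2*k}. f1 n * f1 n)"
    "Pk v E \<alpha> x k $ 1 $ 2 = (\<Sum>n\<in>{1..2*k}. f1 n * f2 n)"
    "Pk v E \<alpha> x k $ 2 $ 1 = (\<Sum>n\<in>{1..2*k}. f1 n * f2 n)"
    "Pk v E \<alpha> x k $ 2 $ 2 = (\<Sum>n\<in>{1..2*k}. f2 n * f2 n)"
proof -
  have S: "Suc (2 * j - 1) = 2*j" if "j \<in> {1..k}" for j using that by auto
  have T: "\<And>j a b. j \<in> {1..k} \<Longrightarrow> (transpose (transfer v E \<alpha> (2*j - 1) (x + \<alpha>)) ** transfer v E \<alpha> (2*j - 1) (x + \<alpha>)) $ a $ b
      = transfer v E \<alpha> (2*j - 1) (x + \<alpha>) $ 1 $ a * transfer v E \<alpha> (2*j - 1) (x + \<alpha>) $ 1 $ b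
       + transfer v E \<alpha> (2*j - 1) (x + \<alpha>) $ 2 $ a * transfer v E \<alpha> (2*j - 1) (x + \<alpha>) $ 2 $ b"
    by (simp add: matrix_matrix_mult_def sum_2 transpose_def)
  show "Pk v E \<alpha> x k $ 1 $ 1 = (\<Sum>n\<in>{1..2*k}. f1 n * f1 n)"
    unfolding Pk_def sum_component
    by (subst sum_pairs[symmetric], rule sum.cong, simp, subst T, simp,
        simp add: transfer_entries S f1_def phiE_def)
  show "Pk v E \<alpha> x k $ 1 $ 2 = (\<Sum>n\<in>{1..2*k}. f1 n * f2 n)"
    unfolding Pk_def sum_component
    by (subst sum_pairs[symmetric], rule sum.cong, simp, subst T, simp,
        simp add: transfer_entries S f1_def phiE_def f2_def thetaE_def)
  show "Pk v E \<alpha> x k $ 2 $ 1 = (\<Sum>n\<in>{1..2*k}. f1 n * f2 n)"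
    unfolding Pk_def sum_component
    by (subst sum_pairs[symmetric], rule sum.cong, simp, subst T, simp,
        simp add: transfer_entries S f1_def phiE_def f2_def thetaE_def mult.commute)
  show "Pk v E \<alpha> x k $ 2 $ 2 = (\<Sum>n\<in>{1..2*k}. f2 n * f2 n)"
    unfolding Pk_def sum_component
    by (subst sum_pairs[symmetric], rule sum.cong, simp, subst T, simp,
        simp add: transfer_entries S f2_def thetaE_def)
qed


lemma green:
  fixes u :: "nat \<Rightarrow> complex" and V :: "nat \<Rightarrow> real"
  assumes rec: "\<And>n. n \<ge> 1 \<Longrightarrow> u (Suc n) = (z - of_real (V n)) * u n - u (n - 1)"
  shows "Im z * (\<Sum>n\<in>{1..N}. (cmod (u n))\<^sup>2) = Im (u (Suc N) * cnj (u N)) - Im (u 1 * cnj (u 0))"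
proof (induction N)
  case 0 then show ?case by simp
next
  case (Suc N)
  have r: "u (Suc (Suc N)) = (z - of_real (V (Suc N))) * u (Suc N) - u N" using rec[of "Suc N"] by simp
  have "Im (u (Suc (Suc N)) * cnj (u (Suc N))) - Im (u (Suc N) * cnj (u N)) = Im z * (cmod (u (Suc N)))\<^sup>2"
  proof -
    have c: "(cmod w)\<^sup>2 = Re w * Re w + Im w * Im w" for w using cmod_power2[of w] by (simp add: power2_eq_square)
    show ?thesis unfolding r c by (simp add: algebra_simps)
  qed
  then show ?case using Suc by (simp add: algebra_simps)
qed

lemma lagrange:
  fixes f g :: "nat \<Rightarrow> real"
  shows "(\<Sum>n\<in>{1..L}. \<Sum>j\<in>{1..<n}. (f n * g j - g n * f j)\<^sup>2)
        = (\<Sum>n\<in>{1..L}. f n * f n) * (\<Sum>n\<in>{1..L}. g n * g n) - (\<Sum>n\<in>{1..L}. f n * g n)\<^sup>2"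
proof (induction L)
  case 0 then show ?case by simp
next
  case (Suc L)
  have e: "{1..<Suc L} = {1..L}" by auto
  have "(\<Sum>j\<in>{1..L}. (f (Suc L) * g j - g (Suc L) * f j)\<^sup>2)
     = (f (Suc L))\<^sup>2 * (\<Sum>j\<in>{1..L}. g j * g j) - 2 * f (Suc L) * g (Suc L) * (\<Sum>j\<in>{1..L}. f j * g j)
       + (g (Suc L))\<^sup>2 * (\<Sum>j\<in>{1..L}. f j * f j)"
    by (simp add: power2_eq_square algebra_simps sum.distrib sum_subtractf sum_distrib_left)
  then show ?case using Suc
    apply (simp only: sum.cl_ivl_Suc e)
    apply (simp add: power2_eq_square algebra_simps)
    done
qed


lemma rsol_lin: "rsol c a0 a1 n = a0 * rsol c 1 0 n + a1 * rsol c 0 1 n"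
  by (induction c a0 a1 n rule: rsol.induct) (auto simp: algebra_simps)

lemma rsol_unique:
  assumes "\<And>n. n \<ge> 1 \<Longrightarrow> u (Suc n) = c n * u n - u (n - 1)"
  shows "u n = rsol c (u 0) (u 1) n"
proof (induction n rule: less_induct)
  case (less n)
  show ?case
  proof (cases n)
    case 0 then show ?thesis by simp
  next
    case (Suc n')
    show ?thesis
    proof (cases n')
      case 0 then show ?thesis using Suc by simp
    next
      case (Suc n'')
      have h1: "u n' = rsol c (u 0) (u 1) n'" using less[of n'] \<open>n = Suc n'\<close> by simp
      have h2: "u n'' = rsol c (u 0) (u 1) n''" using less[of n''] \<open>n = Suc n'\<close> Suc by simp
      have h3: "u n = c n' * u n' - u n''" using assms[of n'] \<open>n = Suc n'\<close> Suc by simp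
      show ?thesis unfolding h3 h1 h2 using \<open>n = Suc n'\<close> Suc by simp
    qed
  qed
qed

lemma green_rsol:
  fixes V :: "nat \<Rightarrow> real"
  shows "Im z * (\<Sum>n\<in>{1..N}. (cmod (rsol (\<lambda>n. z - of_real (V n)) aa ab n))\<^sup>2)
     = Im (rsol (\<lambda>n. z - of_real (V n)) aa ab (Suc N) * cnj (rsol (\<lambda>n. z - of_real (V n)) aa ab N))
       - Im (ab * cnj aa)"
proof -
  have "Im z * (\<Sum>n\<in>{1..N}. (cmod (rsol (\<lambda>n. z - of_real (V n)) aa ab n))\<^sup>2)
     = Im (rsol (\<lambda>n. z - of_real (V n)) aa ab (Suc N) * cnj (rsol (\<lambda>n. z - of_real (V n)) aa ab N))
       - Im (rsol (\<lambda>n. z - of_real (V n)) aa ab 1 * cnj (rsol (\<lambda>n. z - of_real (V n)) aa ab 0))"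
    by (rule green) (rule rsol_rec)
  then show ?thesis by (simp only: One_nat_def rsol.simps(1,2))
qed

lemma sum_mono_N:
  fixes f :: "nat \<Rightarrow> real"
  assumes "\<And>n. f n \<ge> 0" "N \<le> M"
  shows "(\<Sum>n\<in>{1..N}. f n) \<le> (\<Sum>n\<in>{1..M}. f n)"
  using assms by (intro sum_mono2) auto

lemma weyl_exists:
  fixes V :: "nat \<Rightarrow> real" and z :: complex
  assumes ez: "Im z > 0"
  defines "c \<equiv> (\<lambda>n. z - of_real (V n))"
  shows "\<exists>m. \<forall>N. Im z * (\<Sum>n\<in>{1..N}. (cmod (rsol c 1 (-m) n))\<^sup>2) \<le> Im m"
proof -
  define a where "a = rsol c 1 0"
  define b where "b = rsol c 0 1"
  have um: "rsol c 1 (-m) n = a n - m * b n" for m n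
    using rsol_lin[of c 1 "-m" n] by (simp add: a_def b_def)
  have bnz: "b (Suc M) \<noteq> 0" if "M \<ge> 1" for M
  proof
    assume h: "b (Suc M) = 0"
    have "Im z * (\<Sum>n\<in>{1..M}. (cmod (b n))\<^sup>2) = 0"
      using green_rsol[where z=z and V=V and N=M and aa=0 and ab=1] h by (simp add: b_def c_def)
    then have "(\<Sum>n\<in>{1..M}. (cmod (b n))\<^sup>2) = 0" using ez by simp
    then have "(cmod (b 1))\<^sup>2 = 0" using that by (subst (asm) sum_nonneg_eq_0_iff) auto
    then show False by (simp add: b_def)
  qed
  define mM where "mM M = a (Suc M) / b (Suc M)" for M
  have goodM: "Im z * (\<Sum>n\<in>{1..N}. (cmod (rsol c 1 (-mM M) n))\<^sup>2) \<le> Im (mM M)"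
    if "M \<ge> 1" "N \<le> M" for M N
  proof -
    have z0: "rsol c 1 (-mM M) (Suc M) = 0"
      using bnz[OF that(1)] by (simp add: um mM_def)
    have "Im z * (\<Sum>n\<in>{1..M}. (cmod (rsol c 1 (-mM M) n))\<^sup>2) = Im (mM M)"
      using green_rsol[where z=z and V=V and N=M and aa=1 and ab="-mM M"] z0 by (simp add: c_def)
    moreover have "(\<Sum>n\<in>{1..N}. (cmod (rsol c 1 (-mM M) n))\<^sup>2) \<le> (\<Sum>n\<in>{1..M}. (cmod (rsol c 1 (-mM M) n))\<^sup>2)"
      by (rule sum_mono_N) (use that in auto)
    ultimately show ?thesis using ez mult_left_mono[of _ _ "Im z"] by fastforce
  qed
  have bound: "mM M \<in> cball 0 (1 / Im z)" if "M \<ge> 1" for M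
  proof -
    have "Im z * (\<Sum>n\<in>{1..1}. (cmod (rsol c 1 (-mM M) n))\<^sup>2) \<le> Im (mM M)"
      using goodM[OF that that] by simp
    then have h: "Im z * (cmod (mM M))\<^sup>2 \<le> Im (mM M)" by simp
    also have "\<dots> \<le> cmod (mM M)" using abs_Im_le_cmod[of "mM M"] by linarith
    finally have "Im z * (cmod (mM M))\<^sup>2 \<le> cmod (mM M)" .
    then have "Im z * cmod (mM M) \<le> 1"
      by (cases "cmod (mM M) = 0") (auto simp: power2_eq_square)
    then show ?thesis using ez by (simp add: field_simps)
  qed
  have allb: "\<forall>n. mM (Suc n) \<in> cball 0 (1 / Im z)" using bound by simp
  obtain l r where lr0: "l \<in> cball 0 (1 / Im z)" and lr: "strict_mono (r :: nat \<Rightarrow> nat)" "((\<lambda>n. mM (Suc n)) \<circ> r) \<longlonglongrightarrow> l"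
    using seq_compactE[OF compact_imp_seq_compact[OF compact_cball] allb] by blast
  show ?thesis
  proof (intro exI allI)
    fix N
    let ?F = "\<lambda>m. Im z * (\<Sum>n\<in>{1..N}. (cmod (a n - m * b n))\<^sup>2) - Im m"
    have lim: "(\<lambda>n. ?F (mM (Suc (r n)))) \<longlonglongrightarrow> ?F l"
      using lr(2) unfolding comp_def by (intro tendsto_intros)
    have ev: "\<forall>n\<ge>N. ?F (mM (Suc (r n))) \<le> 0"
    proof (intro allI impI)
      fix n assume "n \<ge> N"
      then have "N \<le> Suc (r n)" using seq_suble[OF lr(1), of n] by simp
      then show "?F (mM (Suc (r n))) \<le> 0" using goodM[of "Suc (r n)" N] by (simp add: um)
    qed
    have "?F l \<le> 0" by (rule LIMSEQ_le_const2[OF lim]) (use ev in blast)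
    then show "Im z * (\<Sum>n\<in>{1..N}. (cmod (rsol c 1 (-l) n))\<^sup>2) \<le> Im l" by (simp add: um)
  qed
qed


definition valid_sol where
  "valid_sol v \<alpha> x z u \<longleftrightarrow> u \<noteq> (\<lambda>_. 0) \<and> is_eigensol v \<alpha> x z u \<and> l2_at_plus_infty u"

lemma eig_rec:
  assumes "is_eigensol v \<alpha> x z u" "n \<ge> 1"
  shows "u (int (Suc n)) = (z - of_real (v (x + real n * \<alpha>))) * u (int n) - u (int (n - 1))"
proof -
  have h: "u (int n + 1) + u (int n - 1) + complex_of_real (v (x + real_of_int (int n) * \<alpha>)) * u (int n) = z * u (int n)"
    using assms(1) unfolding is_eigensol_def by blast
  have h2: "u (int n + 1) = (z - complex_of_real (v (x + real_of_int (int n) * \<alpha>))) * u (int n) - u (int n - 1)"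
    using h by algebra
  have e1: "int n - 1 = int (n - 1)" using assms(2) by simp
  have e2: "int (Suc n) = int n + 1" by simp
  show ?thesis unfolding e2 using h2 unfolding e1 by simp
qed

lemma eig_zero:
  assumes "is_eigensol v \<alpha> x z u" "u 0 = 0" "u 1 = 0"
  shows "u = (\<lambda>_. 0)"
proof -
  have E: "u (n + 1) = (z - complex_of_real (v (x + real_of_int n * \<alpha>))) * u n - u (n - 1)"
       "u (n - 1) = (z - complex_of_real (v (x + real_of_int n * \<alpha>))) * u n - u (n + 1)" for n
  proof -
    have h: "u (n + 1) + u (n - 1) + complex_of_real (v (x + real_of_int n * \<alpha>)) * u n = z * u n"
      using assms(1) unfolding is_eigensol_def by blast
    show "u (n + 1) = (z - complex_of_real (v (x + real_of_int n * \<alpha>))) * u n - u (n - 1)"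
      using h by algebra
    show "u (n - 1) = (z - complex_of_real (v (x + real_of_int n * \<alpha>))) * u n - u (n + 1)"
      using h by algebra
  qed
  have f: "u (int k) = 0 \<and> u (int k + 1) = 0" for k
  proof (induction k)
    case 0 then show ?case using assms by simp
  next
    case (Suc k)
    have e1: "int (Suc k) = int k + 1" and e2: "int (Suc k) + 1 = int k + 1 + 1" by simp_all
    show ?case unfolding e1 e2 using Suc E(1)[of "int k + 1"] by simp
  qed
  have b: "u (- int k) = 0 \<and> u (- int k + 1) = 0" for k
  proof (induction k)
    case 0 then show ?case using assms by simp
  next
    case (Suc k)
    have e1: "- int (Suc k) = - int k - 1" and e2: "- int (Suc k) + 1 = - int k" by simp_all
    show ?case unfolding e1 e2 using Suc E(2)[of "- int k"] by simp
  qed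
  show ?thesis
  proof
    fix n :: int
    show "u n = 0"
    proof (cases "n \<ge> 0")
      case True then show ?thesis using f[of "nat n"] by simp
    next
      case False then show ?thesis using b[of "nat (-n)"] by simp
    qed
  qed
qed

lemma l2_tendsto:
  assumes "l2_at_plus_infty u"
  shows "(\<lambda>n. u (int n)) \<longlonglongrightarrow> 0"
proof -
  have "(\<lambda>n. (cmod (u (int n)))\<^sup>2) \<longlonglongrightarrow> 0"
    using summable_LIMSEQ_zero assms unfolding l2_at_plus_infty_def by blast
  then have "(\<lambda>n. sqrt ((cmod (u (int n)))\<^sup>2)) \<longlonglongrightarrow> sqrt 0" by (intro tendsto_intros)
  then have "(\<lambda>n. norm (u (int n))) \<longlonglongrightarrow> 0" by simp
  then show ?thesis by (simp add: tendsto_norm_zero_iff)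
qed

lemma tail_le:
  fixes U :: "nat \<Rightarrow> complex" and V :: "nat \<Rightarrow> real"
  assumes rec: "\<And>n. n \<ge> 1 \<Longrightarrow> U (Suc n) = (z - of_real (V n)) * U n - U (n - 1)"
    and lim: "U \<longlonglongrightarrow> 0" and ez: "Im z > 0"
  shows "Im z * (\<Sum>n\<in>{1..N}. (cmod (U n))\<^sup>2) \<le> - Im (U 1 * cnj (U 0))"
proof -
  have T0: "(\<lambda>M. U (Suc M) * cnj (U M)) \<longlonglongrightarrow> 0 * cnj 0"
    using lim by (intro tendsto_intros LIMSEQ_Suc)
  have T: "(\<lambda>M. Im (U (Suc M) * cnj (U M))) \<longlonglongrightarrow> 0"
    using tendsto_Im[OF T0] by (simp only: complex_cnj_zero mult_zero_left zero_complex.sel(2))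
  have "0 \<ge> Im z * (\<Sum>n\<in>{1..N}. (cmod (U n))\<^sup>2) + Im (U 1 * cnj (U 0))"
  proof (rule LIMSEQ_le_const[OF T])
    show "\<exists>N0. \<forall>M\<ge>N0. Im z * (\<Sum>n\<in>{1..N}. (cmod (U n))\<^sup>2) + Im (U 1 * cnj (U 0)) \<le> Im (U (Suc M) * cnj (U M))"
    proof (intro exI allI impI)
      fix M assume "M \<ge> N"
      have "(\<Sum>n\<in>{1..N}. (cmod (U n))\<^sup>2) \<le> (\<Sum>n\<in>{1..M}. (cmod (U n))\<^sup>2)"
        by (rule sum_mono_N) (use \<open>M \<ge> N\<close> in auto)
      then have "Im z * (\<Sum>n\<in>{1..N}. (cmod (U n))\<^sup>2) \<le> Im z * (\<Sum>n\<in>{1..M}. (cmod (U n))\<^sup>2)"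
        using ez by (simp add: mult_left_mono)
      also have "\<dots> = Im (U (Suc M) * cnj (U M)) - Im (U 1 * cnj (U 0))"
        by (rule green) (rule rec)
      finally show "Im z * (\<Sum>n\<in>{1..N}. (cmod (U n))\<^sup>2) + Im (U 1 * cnj (U 0)) \<le> Im (U (Suc M) * cnj (U M))"
        by simp
    qed
  qed
  then show ?thesis by simp
qed


lemma valid_rec:
  assumes "valid_sol v \<alpha> x z u" "n \<ge> 1"
  shows "(\<lambda>n. u (int n)) (Suc n) = (z - of_real (v (x + real n * \<alpha>))) * (\<lambda>n. u (int n)) n - (\<lambda>n. u (int n)) (n - 1)"
  using eig_rec[of v \<alpha> x z u n] assms unfolding valid_sol_def by simp

lemma valid_u0:
  assumes ez: "Im z > 0" and val: "valid_sol v \<alpha> x z u"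
  shows "u 0 \<noteq> 0"
proof
  assume h: "u 0 = 0"
  have lim: "(\<lambda>n. u (int n)) \<longlonglongrightarrow> 0" using l2_tendsto val unfolding valid_sol_def by blast
  have "Im z * (\<Sum>n\<in>{1..1}. (cmod ((\<lambda>n. u (int n)) n))\<^sup>2) \<le> - Im ((\<lambda>n. u (int n)) 1 * cnj ((\<lambda>n. u (int n)) 0))"
    by (rule tail_le[where V="\<lambda>n. v (x + real n * \<alpha>)"]) (use valid_rec[OF val] lim ez in auto)
  then have "Im z * (cmod (u 1))\<^sup>2 \<le> 0" using h by simp
  then have "u 1 = 0" using ez by (simp add: mult_le_0_iff)
  then have "u = (\<lambda>_. 0)" using eig_zero[of v \<alpha> x z u] h val unfolding valid_sol_def by blast
  then show False using val unfolding valid_sol_def by blast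
qed

lemma valid_good:
  assumes ez: "Im z > 0" and val: "valid_sol v \<alpha> x z u"
  shows "Im z * (\<Sum>n\<in>{1..N}. (cmod (rsol (\<lambda>n. z - of_real (v (x + real n * \<alpha>))) 1 (- (- u 1 / u 0)) n))\<^sup>2)
         \<le> Im (- u 1 / u 0)"
proof -
  have u0: "u 0 \<noteq> 0" by (rule valid_u0[OF ez val])
  define U where "U n = u (int n) / u 0" for n
  have rec: "U (Suc n) = (z - of_real (v (x + real n * \<alpha>))) * U n - U (n - 1)" if "n \<ge> 1" for n
    using valid_rec[OF val that] unfolding U_def by (simp add: diff_divide_distrib)
  have lim0: "(\<lambda>n. u (int n)) \<longlonglongrightarrow> 0" using l2_tendsto val unfolding valid_sol_def by blast
  have lim: "U \<longlonglongrightarrow> 0" unfolding U_def using tendsto_divide_zero[OF lim0] by simp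
  have Ueq: "U n = rsol (\<lambda>n. z - of_real (v (x + real n * \<alpha>))) 1 (- (- u 1 / u 0)) n" for n
  proof -
    have "U n = rsol (\<lambda>n. z - of_real (v (x + real n * \<alpha>))) (U 0) (U 1) n"
      by (rule rsol_unique) (rule rec)
    moreover have "U 0 = 1" "U 1 = - (- u 1 / u 0)" using u0 by (simp_all add: U_def)
    ultimately show ?thesis by simp
  qed
  have "Im z * (\<Sum>n\<in>{1..N}. (cmod (U n))\<^sup>2) \<le> - Im (U 1 * cnj (U 0))"
    by (rule tail_le[OF rec lim ez])
  moreover have "- Im (U 1 * cnj (U 0)) = Im (- u 1 / u 0)" using u0 by (simp add: U_def)
  ultimately show ?thesis by (simp add: Ueq)
qed

lemma valid_unique:
  assumes ez: "Im z > 0" and vu: "valid_sol v \<alpha> x z u" and vw: "valid_sol v \<alpha> x z w"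
  shows "- u 1 / u 0 = - w 1 / w 0"
proof -
  define U where "U n = u (int n)" for n
  define W where "W n = w (int n)" for n
  define Wr where "Wr n = U (Suc n) * W n - U n * W (Suc n)" for n
  have rU: "U (Suc n) = (z - of_real (v (x + real n * \<alpha>))) * U n - U (n - 1)" if "n \<ge> 1" for n
    using valid_rec[OF vu that] unfolding U_def by simp
  have rW: "W (Suc n) = (z - of_real (v (x + real n * \<alpha>))) * W n - W (n - 1)" if "n \<ge> 1" for n
    using valid_rec[OF vw that] unfolding W_def by simp
  have step: "Wr (Suc n) = Wr n" for n
    unfolding Wr_def rU[of "Suc n", simplified] rW[of "Suc n", simplified] by (simp add: algebra_simps)
  have const: "Wr n = Wr 0" for n by (induction n) (simp_all add: step)
  have lU: "U \<longlonglongrightarrow> 0" using l2_tendsto vu unfolding valid_sol_def U_def by blast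
  have lW: "W \<longlonglongrightarrow> 0" using l2_tendsto vw unfolding valid_sol_def W_def by blast
  have "Wr \<longlonglongrightarrow> 0 * 0 - 0 * 0" unfolding Wr_def
    by (intro tendsto_intros LIMSEQ_Suc lU lW)
  moreover have "Wr = (\<lambda>n. Wr 0)" using const by auto
  ultimately have "(\<lambda>n. Wr 0) \<longlonglongrightarrow> 0" by simp
  then have "Wr 0 = 0" using LIMSEQ_const_iff by blast
  then have "u 1 * w 0 = u 0 * w 1" unfolding Wr_def U_def W_def by simp
  moreover have "u 0 \<noteq> 0" "w 0 \<noteq> 0" using valid_u0 ez vu vw by blast+
  ultimately show ?thesis by (simp add: field_simps)
qed


lemma valid_exists:
  assumes ez: "Im z > 0"
  shows "\<exists>u. valid_sol v \<alpha> x z u"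
proof -
  define c where "c = (\<lambda>n. z - of_real (v (x + real n * \<alpha>)))"
  obtain m where good: "\<And>N. Im z * (\<Sum>n\<in>{1..N}. (cmod (rsol c 1 (-m) n))\<^sup>2) \<le> Im m"
    using weyl_exists[OF ez, of "\<lambda>n. v (x + real n * \<alpha>)"] unfolding c_def by blast
  define f where "f = rsol c 1 (-m)"
  define c' where "c' = (\<lambda>k. z - of_real (v (x - real k * \<alpha>)))"
  define g where "g = rsol c' (f 0) ((z - of_real (v x)) * f 0 - f 1)"
  define u where "u n = (if n \<ge> 0 then f (nat n) else g (nat (- n)))" for n :: int
  have frec: "f (Suc n) = c n * f n - f (n - 1)" if "n \<ge> 1" for n
    unfolding f_def using rsol_rec[OF that] .
  have grec: "g (Suc n) = c' n * g n - g (n - 1)" if "n \<ge> 1" for n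
    unfolding g_def using rsol_rec[OF that] .
  have eig: "is_eigensol v \<alpha> x z u"
    unfolding is_eigensol_def
  proof
    fix n :: int
    show "u (n + 1) + u (n - 1) + complex_of_real (v (x + real_of_int n * \<alpha>)) * u n = z * u n"
    proof (cases "n \<ge> 1")
      case True
      define k where "k = nat n"
      have k: "n = int k" "k \<ge> 1" using True by (simp_all add: k_def)
      have h1: "nat (int k + 1) = Suc k" "nat (int k - 1) = k - 1" by simp_all
      have a: "u (n + 1) = f (Suc k)" "u (n - 1) = f (k - 1)" "u n = f k"
        using k unfolding u_def by (simp_all only: h1) simp_all
      show ?thesis unfolding a using frec[OF k(2)] k(1) by (simp add: c_def algebra_simps)
    next
      case False
      show ?thesis
      proof (cases "n = 0")
        case True
        have a: "u (n + 1) = f 1" "u (n - 1) = g 1" "u n = f 0" using True by (simp_all add: u_def)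
        show ?thesis unfolding a using True by (simp add: g_def algebra_simps)
      next
        case False
        define k where "k = nat (- n)"
        have k: "n = - int k" "k \<ge> 1" using False \<open>\<not> n \<ge> 1\<close> by (simp_all add: k_def)
        have a1: "u (n + 1) = g (k - 1)"
        proof (cases "k = 1")
          case True then show ?thesis using k by (simp add: u_def g_def)
        next
          case False then show ?thesis using k by (simp add: u_def nat_diff_distrib')
        qed
        have a: "u (n - 1) = g (Suc k)" "u n = g k"
          using k by (simp_all add: u_def nat_add_distrib)
        have vv: "v (x + real_of_int n * \<alpha>) = v (x - real k * \<alpha>)" using k by simp
        show ?thesis unfolding a1 a vv using grec[OF k(2)] by (simp add: c'_def algebra_simps)
      qed
    qed
  qed
  have l2: "l2_at_plus_infty u"
    unfolding l2_at_plus_infty_def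
  proof (rule summableI_nonneg_bounded)
    fix n
    show "(\<Sum>i<n. (cmod (u (int i)))\<^sup>2) \<le> 1 + Im m / Im z"
    proof -
      have "(\<Sum>i<n. (cmod (u (int i)))\<^sup>2) = (\<Sum>i<n. (cmod (f i))\<^sup>2)"
        by (rule sum.cong) (auto simp: u_def)
      also have "\<dots> \<le> (\<Sum>i\<in>{0..n}. (cmod (f i))\<^sup>2)"
        by (rule sum_mono2) auto
      also have "\<dots> = 1 + (\<Sum>i\<in>{1..n}. (cmod (f i))\<^sup>2)"
        by (subst sum.atLeast_Suc_atMost) (simp_all add: f_def)
      also have "(\<Sum>i\<in>{1..n}. (cmod (f i))\<^sup>2) \<le> Im m / Im z"
        using good[of n] ez by (simp add: f_def field_simps mult.commute)
      finally show ?thesis by simp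
    qed
  qed simp
  have nz: "u \<noteq> (\<lambda>_. 0)"
  proof
    assume "u = (\<lambda>_. 0)"
    then have "u 0 = 0" by simp
    then show False by (simp add: u_def f_def)
  qed
  show ?thesis using eig l2 nz unfolding valid_sol_def by blast
qed

lemma m_plus_good:
  assumes e: "\<epsilon> > 0"
  shows "\<epsilon> * (\<Sum>n\<in>{1..N}. (cmod (rsol (\<lambda>n. Complex E \<epsilon> - of_real (v (x + real n * \<alpha>))) 1
             (- m_plus v \<alpha> x (Complex E \<epsilon>)) n))\<^sup>2) \<le> Im (m_plus v \<alpha> x (Complex E \<epsilon>))"
proof -
  let ?z = "Complex E \<epsilon>"
  have ez: "Im ?z > 0" using e by simp
  obtain u where val: "valid_sol v \<alpha> x ?z u" using valid_exists[OF ez] by blast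
  have mp: "m_plus v \<alpha> x ?z = - u 1 / u 0"
    unfolding m_plus_def
  proof (rule the_equality)
    show "\<exists>u'. u' \<noteq> (\<lambda>_. 0) \<and> is_eigensol v \<alpha> x ?z u' \<and> l2_at_plus_infty u' \<and> - u 1 / u 0 = - u' 1 / u' 0"
      using val unfolding valid_sol_def by blast
  next
    fix m assume "\<exists>u'. u' \<noteq> (\<lambda>_. 0) \<and> is_eigensol v \<alpha> x ?z u' \<and> l2_at_plus_infty u' \<and> m = - u' 1 / u' 0"
    then obtain u' where "valid_sol v \<alpha> x ?z u'" "m = - u' 1 / u' 0" unfolding valid_sol_def by blast
    then show "m = - u 1 / u 0" using valid_unique[OF ez _ val] by blast
  qed
  show ?thesis unfolding mp using valid_good[OF ez val, of N] by simp
qed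


lemma wronsk:
  fixes c :: "nat \<Rightarrow> real"
  shows "rsol c 0 1 (Suc n) * rsol c 1 0 n - rsol c 1 0 (Suc n) * rsol c 0 1 n = 1"
proof (induction n)
  case 0 then show ?case by simp
next
  case (Suc n)
  then show ?case by (simp add: algebra_simps)
qed

lemma alg1: "(p2::complex) = c*p1 - p0 \<Longrightarrow> t2 = c*t1 - t0 \<Longrightarrow> p2*t1 - t2*p1 = 1 \<Longrightarrow>
   p2*(A + t1*u) - t2*(B + p1*u) = c*(p1*A - t1*B) - (p0*A - t0*B) + u" by algebra
lemma alg2: "(u2::complex) = (c + \<i>*e)*u1 - u0 \<Longrightarrow> p2 = c*p1 - p0 \<Longrightarrow> t2 = c*t1 - t0 \<Longrightarrow>
   u2 - (-m*p2 + t2) = c*(u1 - (-m*p1+t1)) - (u0 - (-m*p0 + t0)) + \<i>*e*u1" by algebra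
lemma alg3: "(d1::complex) = f*X1 \<Longrightarrow> d0 = f*X0 \<Longrightarrow> Y = c*X1 - X0 + u1 \<Longrightarrow> c*d1 - d0 + f*u1 = f*Y" by algebra

lemma var_param:
  fixes c :: "nat \<Rightarrow> real" and e :: real and m :: complex
  defines "\<phi> \<equiv> rsol c 0 1" and "\<theta> \<equiv> rsol c 1 0"
    and "u \<equiv> rsol (\<lambda>n. complex_of_real (c n) + \<i> * complex_of_real e) 1 (-m)"
  shows "u n - (- m * of_real (\<phi> n) + of_real (\<theta> n)) =
    \<i> * of_real e * (of_real (\<phi> n) * (\<Sum>j\<in>{1..<n}. of_real (\<theta> j) * u j)
                       - of_real (\<theta> n) * (\<Sum>j\<in>{1..<n}. of_real (\<phi> j) * u j))"
proof (induction n rule: less_induct)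
  case (less n)
  define A where "A n = (\<Sum>j\<in>{1..<n}. of_real (\<theta> j) * u j)" for n
  define B where "B n = (\<Sum>j\<in>{1..<n}. of_real (\<phi> j) * u j)" for n
  show ?case
  proof (cases "n \<le> 1")
    case True
    then consider "n = 0" | "n = 1" by linarith
    then show ?thesis by cases (simp_all add: u_def \<phi>_def \<theta>_def)
  next
    case False
    define k where "k = n - 2"
    have k: "n = Suc (Suc k)" using False unfolding k_def by arith
    have IH1: "u (Suc k) - (- m * of_real (\<phi> (Suc k)) + of_real (\<theta> (Suc k))) = \<i> * of_real e * (of_real (\<phi> (Suc k)) * A (Suc k) - of_real (\<theta> (Suc k)) * B (Suc k))"
      using less[of "Suc k"] k unfolding A_def B_def by simp
    have IH0: "u k - (- m * of_real (\<phi> k) + of_real (\<theta> k)) = \<i> * of_real e * (of_real (\<phi> k) * A k - of_real (\<theta> k) * B k)"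
      using less[of k] k unfolding A_def B_def by simp
    have A1: "A (Suc (Suc k)) = A (Suc k) + of_real (\<theta> (Suc k)) * u (Suc k)"
      unfolding A_def by (simp add: atLeastLessThanSuc)
    have B1: "B (Suc (Suc k)) = B (Suc k) + of_real (\<phi> (Suc k)) * u (Suc k)"
      unfolding B_def by (simp add: atLeastLessThanSuc)
    have A0: "of_real (\<phi> k) * A (Suc k) - of_real (\<theta> k) * B (Suc k) = of_real (\<phi> k) * A k - of_real (\<theta> k) * B k"
    proof (cases k)
      case 0 then show ?thesis by (simp add: A_def B_def)
    next
      case (Suc k')
      have "A (Suc k) = A k + of_real (\<theta> k) * u k" "B (Suc k) = B k + of_real (\<phi> k) * u k"
        unfolding A_def B_def using Suc by (simp_all add: atLeastLessThanSuc)
      then show ?thesis by (simp add: algebra_simps)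
    qed
    have W: "\<phi> (Suc (Suc k)) * \<theta> (Suc k) - \<theta> (Suc (Suc k)) * \<phi> (Suc k) = 1"
      unfolding \<phi>_def \<theta>_def by (rule wronsk)
    have W': "complex_of_real (\<phi> (Suc (Suc k))) * complex_of_real (\<theta> (Suc k)) - complex_of_real (\<theta> (Suc (Suc k))) * complex_of_real (\<phi> (Suc k)) = 1"
      using arg_cong[OF W, of complex_of_real] by simp
    have ru: "u (Suc (Suc k)) = (complex_of_real (c (Suc k)) + \<i> * complex_of_real e) * u (Suc k) - u k"
      by (simp add: u_def)
    have rp: "\<phi> (Suc (Suc k)) = c (Suc k) * \<phi> (Suc k) - \<phi> k" by (simp add: \<phi>_def)
    have rt: "\<theta> (Suc (Suc k)) = c (Suc k) * \<theta> (Suc k) - \<theta> k" by (simp add: \<theta>_def)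
    have "of_real (\<phi> (Suc (Suc k))) * A (Suc (Suc k)) - of_real (\<theta> (Suc (Suc k))) * B (Suc (Suc k))
        = of_real (c (Suc k)) * (of_real (\<phi> (Suc k)) * A (Suc k) - of_real (\<theta> (Suc k)) * B (Suc k))
          - (of_real (\<phi> k) * A (Suc k) - of_real (\<theta> k) * B (Suc k)) + u (Suc k)"
      unfolding A1 B1 by (rule alg1[OF _ _ W']) (simp_all add: rp rt)
    then have key: "of_real (\<phi> (Suc (Suc k))) * A (Suc (Suc k)) - of_real (\<theta> (Suc (Suc k))) * B (Suc (Suc k))
        = of_real (c (Suc k)) * (of_real (\<phi> (Suc k)) * A (Suc k) - of_real (\<theta> (Suc k)) * B (Suc k))
          - (of_real (\<phi> k) * A k - of_real (\<theta> k) * B k) + u (Suc k)"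
      unfolding A0 .
    have "u (Suc (Suc k)) - (- m * of_real (\<phi> (Suc (Suc k))) + of_real (\<theta> (Suc (Suc k))))
      = of_real (c (Suc k)) * (u (Suc k) - (- m * of_real (\<phi> (Suc k)) + of_real (\<theta> (Suc k))))
        - (u k - (- m * of_real (\<phi> k) + of_real (\<theta> k))) + \<i> * of_real e * u (Suc k)"
      by (rule alg2[OF ru]) (simp_all add: rp rt)
    also have "\<dots> = \<i> * of_real e * (of_real (\<phi> (Suc (Suc k))) * A (Suc (Suc k)) - of_real (\<theta> (Suc (Suc k))) * B (Suc (Suc k)))"
      by (rule alg3[OF IH1 IH0 key])
    finally show ?thesis unfolding k A_def B_def .
  qed
qed


lemma sq_tri: "(cmod (a - b))\<^sup>2 \<le> 3/2 * (cmod a)\<^sup>2 + 3 * (cmod b)\<^sup>2"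
proof -
  have "cmod (a - b) \<le> cmod a + cmod b" by (rule norm_triangle_ineq4)
  then have "(cmod (a - b))\<^sup>2 \<le> (cmod a + cmod b)\<^sup>2" by (simp add: power_mono)
  also have "\<dots> \<le> 3/2 * (cmod a)\<^sup>2 + 3 * (cmod b)\<^sup>2"
  proof -
    have "(cmod a + cmod b)\<^sup>2 = 3/2 * (cmod a)\<^sup>2 + 3 * (cmod b)\<^sup>2 - (cmod a - 2 * cmod b)\<^sup>2 / 2"
      by (simp add: power2_eq_square field_simps)
    then show ?thesis by simp
  qed
  finally show ?thesis .
qed

lemma cmod_u0: "(cmod (- m * complex_of_real a + complex_of_real b))\<^sup>2 = (cmod m)\<^sup>2 * a * a - 2 * Re m * a * b + b * b"
  by (simp add: cmod_power2) (simp add: power2_eq_square algebra_simps)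

lemma est:
  fixes c :: "nat \<Rightarrow> real" and e :: real and m :: complex and L :: nat
  defines "\<phi> \<equiv> rsol c 0 1" and "\<theta> \<equiv> rsol c 1 0"
    and "u \<equiv> rsol (\<lambda>n. complex_of_real (c n) + \<i> * complex_of_real e) 1 (-m)"
  assumes e: "e > 0"
    and det: "e\<^sup>2 * ((\<Sum>n\<in>{1..L}. \<phi> n * \<phi> n) * (\<Sum>n\<in>{1..L}. \<theta> n * \<theta> n) - (\<Sum>n\<in>{1..L}. \<phi> n * \<theta> n)\<^sup>2) = 1/4"
  shows "(cmod m)\<^sup>2 * (\<Sum>n\<in>{1..L}. \<phi> n * \<phi> n) - 2 * Re m * (\<Sum>n\<in>{1..L}. \<phi> n * \<theta> n) + (\<Sum>n\<in>{1..L}. \<theta> n * \<theta> n)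
         \<le> 9/4 * (\<Sum>n\<in>{1..L}. (cmod (u n))\<^sup>2)"
proof -
  define G where "G n j = \<phi> n * \<theta> j - \<theta> n * \<phi> j" for n j
  define S where "S = (\<Sum>n\<in>{1..L}. (cmod (u n))\<^sup>2)"
  define d where "d n = u n - (- m * of_real (\<phi> n) + of_real (\<theta> n))" for n
  have dform: "d n = \<i> * of_real e * (\<Sum>j\<in>{1..<n}. of_real (G n j) * u j)" for n
  proof -
    have "d n = \<i> * of_real e * (of_real (\<phi> n) * (\<Sum>j\<in>{1..<n}. of_real (\<theta> j) * u j)
                       - of_real (\<theta> n) * (\<Sum>j\<in>{1..<n}. of_real (\<phi> j) * u j))"
      unfolding d_def \<phi>_def \<theta>_def u_def by (rule var_param)
    also have "(of_real (\<phi> n) * (\<Sum>j\<in>{1..<n}. of_real (\<theta> j) * u j)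
                       - of_real (\<theta> n) * (\<Sum>j\<in>{1..<n}. of_real (\<phi> j) * u j))
             = (\<Sum>j\<in>{1..<n}. of_real (G n j) * u j)"
      by (simp add: G_def sum_distrib_left sum_subtractf[symmetric] algebra_simps)
    finally show ?thesis .
  qed
  have dn: "(cmod (d n))\<^sup>2 \<le> e\<^sup>2 * (\<Sum>j\<in>{1..<n}. (G n j)\<^sup>2) * S" if "n \<in> {1..L}" for n
  proof -
    have "cmod (d n) = e * cmod (\<Sum>j\<in>{1..<n}. of_real (G n j) * u j)"
      using e by (simp add: dform norm_mult)
    also have "cmod (\<Sum>j\<in>{1..<n}. of_real (G n j) * u j) \<le> (\<Sum>j\<in>{1..<n}. \<bar>G n j\<bar> * cmod (u j))"
      by (rule order_trans[OF norm_sum]) (simp add: norm_mult)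
    finally have h1: "cmod (d n) \<le> e * (\<Sum>j\<in>{1..<n}. \<bar>G n j\<bar> * cmod (u j))" using e by simp
    have h2: "(\<Sum>j\<in>{1..<n}. \<bar>G n j\<bar> * cmod (u j))\<^sup>2 \<le> (\<Sum>j\<in>{1..<n}. (\<bar>G n j\<bar>)\<^sup>2) * (\<Sum>j\<in>{1..<n}. (cmod (u j))\<^sup>2)"
      by (rule Cauchy_Schwarz_ineq_sum)
    have h3: "(\<Sum>j\<in>{1..<n}. (cmod (u j))\<^sup>2) \<le> S"
      unfolding S_def by (rule sum_mono2) (use that in auto)
    have "(cmod (d n))\<^sup>2 \<le> (e * (\<Sum>j\<in>{1..<n}. \<bar>G n j\<bar> * cmod (u j)))\<^sup>2"
      using h1 by (simp add: power_mono)
    also have "\<dots> = e\<^sup>2 * (\<Sum>j\<in>{1..<n}. \<bar>G n j\<bar> * cmod (u j))\<^sup>2" by (simp add: power_mult_distrib)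
    also have "\<dots> \<le> e\<^sup>2 * ((\<Sum>j\<in>{1..<n}. (G n j)\<^sup>2) * (\<Sum>j\<in>{1..<n}. (cmod (u j))\<^sup>2))"
      using h2 by (simp add: mult_left_mono)
    also have "\<dots> \<le> e\<^sup>2 * ((\<Sum>j\<in>{1..<n}. (G n j)\<^sup>2) * S)"
      using h3 by (intro mult_left_mono) (auto intro: sum_nonneg)
    finally show ?thesis by (simp add: mult.assoc)
  qed
  have sumd: "(\<Sum>n\<in>{1..L}. (cmod (d n))\<^sup>2) \<le> S / 4"
  proof -
    have "(\<Sum>n\<in>{1..L}. (cmod (d n))\<^sup>2) \<le> (\<Sum>n\<in>{1..L}. e\<^sup>2 * (\<Sum>j\<in>{1..<n}. (G n j)\<^sup>2) * S)"
      by (rule sum_mono) (rule dn)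
    also have "\<dots> = e\<^sup>2 * (\<Sum>n\<in>{1..L}. \<Sum>j\<in>{1..<n}. (G n j)\<^sup>2) * S"
      by (simp add: sum_distrib_left sum_distrib_right)
    also have "(\<Sum>n\<in>{1..L}. \<Sum>j\<in>{1..<n}. (G n j)\<^sup>2) = (\<Sum>n\<in>{1..L}. \<phi> n * \<phi> n) * (\<Sum>n\<in>{1..L}. \<theta> n * \<theta> n) - (\<Sum>n\<in>{1..L}. \<phi> n * \<theta> n)\<^sup>2"
      unfolding G_def by (rule lagrange)
    also have "e\<^sup>2 * ((\<Sum>n\<in>{1..L}. \<phi> n * \<phi> n) * (\<Sum>n\<in>{1..L}. \<theta> n * \<theta> n) - (\<Sum>n\<in>{1..L}. \<phi> n * \<theta> n)\<^sup>2) * S = S / 4"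
      unfolding det by simp
    finally show ?thesis .
  qed
  have "(\<Sum>n\<in>{1..L}. (cmod (- m * of_real (\<phi> n) + of_real (\<theta> n)))\<^sup>2) \<le> (\<Sum>n\<in>{1..L}. 3/2 * (cmod (u n))\<^sup>2 + 3 * (cmod (d n))\<^sup>2)"
  proof (rule sum_mono)
    fix n
    have "- m * of_real (\<phi> n) + of_real (\<theta> n) = u n - d n" by (simp add: d_def)
    then show "(cmod (- m * of_real (\<phi> n) + of_real (\<theta> n)))\<^sup>2 \<le> 3/2 * (cmod (u n))\<^sup>2 + 3 * (cmod (d n))\<^sup>2"
      using sq_tri by simp
  qed
  also have "\<dots> = 3/2 * S + 3 * (\<Sum>n\<in>{1..L}. (cmod (d n))\<^sup>2)"
    by (simp add: S_def sum.distrib sum_distrib_left)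
  also have "\<dots> \<le> 9/4 * S" using sumd by simp
  finally have "(\<Sum>n\<in>{1..L}. (cmod (- m * of_real (\<phi> n) + of_real (\<theta> n)))\<^sup>2) \<le> 9/4 * S" .
  moreover have "(\<Sum>n\<in>{1..L}. (cmod (- m * of_real (\<phi> n) + of_real (\<theta> n)))\<^sup>2)
      = (cmod m)\<^sup>2 * (\<Sum>n\<in>{1..L}. \<phi> n * \<phi> n) - 2 * Re m * (\<Sum>n\<in>{1..L}. \<phi> n * \<theta> n) + (\<Sum>n\<in>{1..L}. \<theta> n * \<theta> n)"
    unfolding cmod_u0 by (simp add: sum.distrib sum_subtractf sum_distrib_left mult.assoc)
  ultimately show ?thesis by (simp add: S_def)
qed


lemma moeb_rot:
  "moebius (rot (- \<beta> / (2*pi))) z =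
     (of_real (cos \<beta>) * z + of_real (sin \<beta>)) / (- of_real (sin \<beta>) * z + of_real (cos \<beta>))"
proof -
  have e: "2 * pi * (- \<beta> / (2 * pi)) = - \<beta>" by simp
  show ?thesis unfolding moebius_def rot_def by (simp add: e)
qed

lemma Im_moeb:
  fixes c0 s0 :: real
  shows "Im ((of_real c0 * m + of_real s0) / (- of_real s0 * m + of_real c0))
     = (c0\<^sup>2 + s0\<^sup>2) * Im m / ((c0 - s0 * Re m)\<^sup>2 + (s0 * Im m)\<^sup>2)"
  by (simp add: Im_divide power2_eq_square algebra_simps)


lemma moeb_bound:
  fixes z :: complex and c s :: real
  assumes z: "Im z > 0" and cs: "c\<^sup>2 + s\<^sup>2 = 1"
  shows "cmod ((of_real c * z + of_real s) / (- of_real s * z + of_real c)) \<le> ((cmod z)\<^sup>2 + 1) / Im z"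
proof -
  define a b where "a = Re z" and "b = Im z"
  have zab: "z = Complex a b" by (simp add: a_def b_def)
  define w where "w = (of_real c * z + of_real s) / (- of_real s * z + of_real c)"
  define dd where "dd = (c - s*a)\<^sup>2 + (s*b)\<^sup>2"
  have b: "b > 0" using z by (simp add: b_def)
  have dd: "dd > 0"
  proof (cases "s = 0")
    case True then have "c\<^sup>2 = 1" using cs by simp
    then have "c \<noteq> 0" by auto
    then show ?thesis using True by (simp add: dd_def)
  next
    case False then show ?thesis using b by (simp add: dd_def add_nonneg_pos)
  qed
  have Imw: "Im w = b / dd"
    unfolding w_def Im_moeb cs by (simp add: dd_def a_def b_def)
  have r1: "Re (of_real c * z + of_real s) = c*a + s" "Im (of_real c * z + of_real s) = c*b"
    "Re (- of_real s * z + of_real c) = c - s*a" "Im (- of_real s * z + of_real c) = - (s*b)"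
    by (simp_all add: a_def b_def)
  have n1: "(cmod (of_real c * z + of_real s))\<^sup>2 = (c*a+s)\<^sup>2 + (c*b)\<^sup>2"
    by (simp only: cmod_power2 r1)
  have d1: "(cmod (- of_real s * z + of_real c))\<^sup>2 = dd"
    by (simp only: cmod_power2 r1 dd_def power2_minus)
  have sumnd: "(c*a+s)\<^sup>2 + (c*b)\<^sup>2 + dd = (c\<^sup>2+s\<^sup>2)*(a\<^sup>2+b\<^sup>2+1)"
    by (simp add: dd_def power2_eq_square algebra_simps)
  have nw: "(cmod w)\<^sup>2 + 1 = (a\<^sup>2 + b\<^sup>2 + 1) / dd"
  proof -
    have "(cmod w)\<^sup>2 = ((c*a+s)\<^sup>2 + (c*b)\<^sup>2) / dd"
      unfolding w_def norm_divide power_divide n1 d1 ..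
    moreover have "(c*a+s)\<^sup>2 + (c*b)\<^sup>2 + dd = a\<^sup>2 + b\<^sup>2 + 1" using sumnd cs by simp
    moreover have "((c*a+s)\<^sup>2 + (c*b)\<^sup>2) / dd + 1 = ((c*a+s)\<^sup>2 + (c*b)\<^sup>2 + dd) / dd"
      using dd by (simp add: add_divide_distrib)
    ultimately show ?thesis by simp
  qed
  have Iw: "Im w > 0" using Imw b dd by simp
  have "Im w \<le> cmod w" using abs_Im_le_cmod[of w] by linarith
  then have "cmod w * Im w \<le> cmod w * cmod w" by (simp add: mult_left_mono)
  then have "cmod w * Im w \<le> (cmod w)\<^sup>2 + 1" by (simp add: power2_eq_square)
  then have "cmod w \<le> ((cmod w)\<^sup>2 + 1) / Im w" using Iw by (simp add: pos_le_divide_eq)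
  also have "((cmod w)\<^sup>2 + 1) / Im w = (a\<^sup>2 + b\<^sup>2 + 1) / b"
    unfolding nw Imw using dd b by (simp add: divide_divide_times_eq)
  also have "\<dots> = ((cmod z)\<^sup>2 + 1) / Im z" by (simp add: cmod_power2 a_def b_def)
  finally show ?thesis unfolding w_def .
qed

lemma psi_upper:
  assumes "Im z > 0"
  shows "psi z \<le> ((cmod z)\<^sup>2 + 1) / Im z"
  unfolding psi_def
proof (rule cSUP_least)
  fix \<beta> :: real
  show "cmod (moebius (rot (- \<beta> / (2 * pi))) z) \<le> ((cmod z)\<^sup>2 + 1) / Im z"
    unfolding moeb_rot by (rule moeb_bound[OF assms]) simp
qed simp

lemma psi_lower:
  assumes "Im z > 0"
  shows "cmod (moebius (rot (- \<beta> / (2*pi))) z) \<le> psi z"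
  unfolding psi_def
proof (rule cSUP_upper)
  show "bdd_above (range (\<lambda>\<beta>. cmod (moebius (rot (- \<beta> / (2 * pi))) z)))"
  proof (rule bdd_aboveI2)
    fix \<beta> :: real
    show "cmod (moebius (rot (- \<beta> / (2 * pi))) z) \<le> ((cmod z)\<^sup>2 + 1) / Im z"
      unfolding moeb_rot by (rule moeb_bound[OF assms]) simp
  qed
qed simp

lemma div_div_same: "(r::complex) \<noteq> 0 \<Longrightarrow> (A/r)/(B/r) = A/B"
  by (cases "B = 0") (simp_all add: field_simps)

lemma rot_exists:
  fixes c0 s0 :: real
  assumes "c0 \<noteq> 0 \<or> s0 \<noteq> 0"
  shows "\<exists>\<beta>. moebius (rot (- \<beta> / (2*pi))) z = (of_real c0 * z + of_real s0) / (- of_real s0 * z + of_real c0)"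
proof -
  define \<rho> where "\<rho> = sqrt (c0\<^sup>2 + s0\<^sup>2)"
  have pos: "c0\<^sup>2 + s0\<^sup>2 > 0" using assms by (auto simp: add_pos_nonneg add_nonneg_pos)
  then have r: "\<rho> > 0" by (simp add: \<rho>_def)
  have rr: "\<rho>\<^sup>2 = c0\<^sup>2 + s0\<^sup>2" using pos by (simp add: \<rho>_def)
  have e1: "(c0/\<rho>)\<^sup>2 + (s0/\<rho>)\<^sup>2 = (c0\<^sup>2 + s0\<^sup>2) / \<rho>\<^sup>2" by (simp add: power_divide add_divide_distrib)
  have e2: "(c0\<^sup>2 + s0\<^sup>2) / \<rho>\<^sup>2 = 1" using rr pos assms by simp
  have "(c0/\<rho>)\<^sup>2 + (s0/\<rho>)\<^sup>2 = 1" using e1 e2 by (rule trans)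
  then obtain t where t: "c0/\<rho> = cos t" "s0/\<rho> = sin t" by (rule sincos_total_2pi)
  have "moebius (rot (- t / (2*pi))) z = (of_real (c0/\<rho>) * z + of_real (s0/\<rho>)) / (- of_real (s0/\<rho>) * z + of_real (c0/\<rho>))"
    unfolding moeb_rot t ..
  also have "\<dots> = ((of_real c0 * z + of_real s0) / of_real \<rho>) / ((- of_real s0 * z + of_real c0) / of_real \<rho>)"
    by (simp add: add_divide_distrib diff_divide_distrib)
  also have "\<dots> = (of_real c0 * z + of_real s0) / (- of_real s0 * z + of_real c0)"
    by (rule div_div_same) (use r in simp)
  finally show ?thesis by blast
qed


lemma final_alg:
  fixes p q r \<epsilon> N :: real and m :: complex
  assumes p: "p > 0" and r: "r > 0" and e: "\<epsilon> > 0"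
    and det: "4 * \<epsilon>\<^sup>2 * (p * r - q\<^sup>2) = 1"
    and X: "(cmod m)\<^sup>2 * p - 2 * Re m * q + r \<le> 9 / (4 * \<epsilon>) * Im m"
    and N1: "p \<le> N" "r \<le> N" and N2: "N \<le> p + r"
  shows "1/10 < psi m / (2 * \<epsilon> * N) \<and> psi m / (2 * \<epsilon> * N) < 10"
proof -
  define a b where "a = Re m" and "b = Im m"
  define \<Delta> where "\<Delta> = p * r - q\<^sup>2"
  define K where "K = 9 / (4 * \<epsilon>)"
  define Xv where "Xv = (a\<^sup>2 + b\<^sup>2) * p - 2 * a * q + r"
  have cm: "(cmod m)\<^sup>2 = a\<^sup>2 + b\<^sup>2" by (simp add: cmod_power2 a_def b_def)
  have Xle: "Xv \<le> K * b" using X by (simp add: Xv_def cm K_def a_def b_def)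
  have D: "\<Delta> = 1 / (4 * \<epsilon>\<^sup>2)" using det e by (simp add: \<Delta>_def field_simps)
  have Dpos: "\<Delta> > 0" using D e by simp
  have K: "K > 0" using e by (simp add: K_def)
  have pX: "p * Xv = (p*a - q)\<^sup>2 + (p*b)\<^sup>2 + \<Delta>"
    by (simp add: Xv_def \<Delta>_def power2_eq_square algebra_simps)
  have rX: "r * Xv = (q*a - r)\<^sup>2 + (q*b)\<^sup>2 + \<Delta> * (a\<^sup>2 + b\<^sup>2)"
    by (simp add: Xv_def \<Delta>_def power2_eq_square algebra_simps)
  have Xpos: "Xv > 0"
  proof -
    have "p * Xv > 0" unfolding pX using Dpos by (simp add: add_nonneg_pos)
    then show ?thesis using p by (simp add: zero_less_mult_iff)
  qed
  have b: "b > 0"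
  proof -
    have "K * b > 0" using Xle Xpos by linarith
    then show ?thesis using K by (simp add: zero_less_mult_iff)
  qed
  have mz: "Im m > 0" using b by (simp add: b_def)
  have NP: "N > 0" using N1 p by linarith
  have up1: "(p + r) * Xv - \<Delta> * (a\<^sup>2 + b\<^sup>2 + 1) = (p*a - q)\<^sup>2 + (q*a - r)\<^sup>2 + b\<^sup>2 * (p\<^sup>2 + q\<^sup>2)"
    by (simp add: Xv_def \<Delta>_def power2_eq_square algebra_simps)
  have "\<Delta> * (a\<^sup>2 + b\<^sup>2 + 1) \<le> (p + r) * Xv" using up1
    by (smt (verit) zero_le_power2 mult_nonneg_nonneg)
  also have "\<dots> \<le> (p + r) * (K * b)" using Xle p r by (simp add: mult_left_mono)
  finally have up2: "\<Delta> * (a\<^sup>2 + b\<^sup>2 + 1) \<le> (p + r) * (K * b)" .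
  have "psi m \<le> ((cmod m)\<^sup>2 + 1) / Im m" by (rule psi_upper[OF mz])
  also have "\<dots> = (a\<^sup>2 + b\<^sup>2 + 1) / b" by (simp add: cm b_def)
  also have "\<dots> \<le> (p + r) * K / \<Delta>"
    using up2 b Dpos by (simp add: field_simps)
  also have "(p + r) * K / \<Delta> = 9 * \<epsilon> * (p + r)"
    unfolding D K_def using e by (simp add: field_simps power2_eq_square)
  also have "\<dots> \<le> 18 * \<epsilon> * N"
  proof -
    have h: "p + r \<le> 2 * N" using N1 by linarith
    show ?thesis using mult_left_mono[OF h, of "9*\<epsilon>"] e by (simp add: algebra_simps)
  qed
  finally have psiU: "psi m \<le> 18 * \<epsilon> * N" .
  have psiL: "2 * \<epsilon> * N / 9 \<le> psi m"
  proof (cases "r \<le> p")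
    case True
    obtain \<beta> where bt: "moebius (rot (- \<beta> / (2*pi))) m = (of_real (-q) * m + of_real (-p)) / (- of_real (-p) * m + of_real (-q))"
      using rot_exists[of "-q" "-p" m] p by auto
    define den where "den = (- q - (- p) * a)\<^sup>2 + (- p * b)\<^sup>2"
    have den: "den = (p*a - q)\<^sup>2 + (p*b)\<^sup>2" by (simp add: den_def power2_eq_square algebra_simps)
    have dpos: "den > 0" using den p b by (simp add: add_nonneg_pos)
    have dle: "den \<le> p * (K * b)"
    proof -
      have "den \<le> p * Xv" using pX den Dpos by simp
      also have "\<dots> \<le> p * (K * b)" using Xle p by (simp add: mult_left_mono)
      finally show ?thesis .
    qed
    have Imv: "Im (moebius (rot (- \<beta> / (2*pi))) m) = ((-q)\<^sup>2 + (-p)\<^sup>2) * b / den"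
      unfolding bt Im_moeb by (simp add: den_def a_def b_def)
    have "2 * \<epsilon> * N / 9 \<le> p / K"
      using N2 True e unfolding K_def by (simp add: field_simps)
    also have "p / K = p\<^sup>2 * b / (p * (K * b))" using p b K by (simp add: field_simps power2_eq_square)
    also have "\<dots> \<le> ((-q)\<^sup>2 + (-p)\<^sup>2) * b / (p * (K * b))"
      using p b K by (intro divide_right_mono mult_right_mono) auto
    also have "\<dots> \<le> ((-q)\<^sup>2 + (-p)\<^sup>2) * b / den"
      using dle dpos b by (intro divide_left_mono) (auto intro!: mult_nonneg_nonneg)
    also have "\<dots> = Im (moebius (rot (- \<beta> / (2*pi))) m)" using Imv by simp
    also have "\<dots> \<le> cmod (moebius (rot (- \<beta> / (2*pi))) m)" using abs_Im_le_cmod by (rule order_trans[rotated]) simp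
    also have "\<dots> \<le> psi m" by (rule psi_lower[OF mz])
    finally show ?thesis .
  next
    case False
    obtain \<beta> where bt: "moebius (rot (- \<beta> / (2*pi))) m = (of_real (-r) * m + of_real (-q)) / (- of_real (-q) * m + of_real (-r))"
      using rot_exists[of "-r" "-q" m] r by auto
    define den where "den = (- r - (- q) * a)\<^sup>2 + (- q * b)\<^sup>2"
    have den: "den = (q*a - r)\<^sup>2 + (q*b)\<^sup>2" by (simp add: den_def power2_eq_square algebra_simps)
    have dpos: "den > 0"
    proof (cases "q = 0")
      case True then show ?thesis using r by (simp add: den)
    next
      case False then show ?thesis using b by (simp add: den add_nonneg_pos)
    qed
    have dle: "den \<le> r * (K * b)"
    proof -
      have "\<Delta> * (a\<^sup>2 + b\<^sup>2) \<ge> 0" using Dpos by simp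
      then have "den \<le> r * Xv" using rX den by simp
      also have "\<dots> \<le> r * (K * b)" using Xle r by (simp add: mult_left_mono)
      finally show ?thesis .
    qed
    have Imv: "Im (moebius (rot (- \<beta> / (2*pi))) m) = ((-r)\<^sup>2 + (-q)\<^sup>2) * b / den"
      unfolding bt Im_moeb by (simp add: den_def a_def b_def)
    have "2 * \<epsilon> * N / 9 \<le> r / K"
      using N2 False e unfolding K_def by (simp add: field_simps)
    also have "r / K = r\<^sup>2 * b / (r * (K * b))" using r b K by (simp add: field_simps power2_eq_square)
    also have "\<dots> \<le> ((-r)\<^sup>2 + (-q)\<^sup>2) * b / (r * (K * b))"
      using r b K by (intro divide_right_mono mult_right_mono) auto
    also have "\<dots> \<le> ((-r)\<^sup>2 + (-q)\<^sup>2) * b / den"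
      using dle dpos b by (intro divide_left_mono) (auto intro!: mult_nonneg_nonneg)
    also have "\<dots> = Im (moebius (rot (- \<beta> / (2*pi))) m)" using Imv by simp
    also have "\<dots> \<le> cmod (moebius (rot (- \<beta> / (2*pi))) m)" using abs_Im_le_cmod by (rule order_trans[rotated]) simp
    also have "\<dots> \<le> psi m" by (rule psi_lower[OF mz])
    finally show ?thesis .
  qed
  have pos: "2 * \<epsilon> * N > 0" using e NP by simp
  show ?thesis
  proof
    have "1/10 < (1/9::real)" by simp
    also have "(1/9::real) \<le> psi m / (2 * \<epsilon> * N)" using psiL pos by (simp add: field_simps)
    finally show "1/10 < psi m / (2 * \<epsilon> * N)" .
    have "psi m / (2 * \<epsilon> * N) \<le> 9" using psiU pos by (simp add: field_simps)
    then show "psi m / (2 * \<epsilon> * N) < 10" by simp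
  qed
qed


lemma norm2_vec: "(norm (y :: real^2))\<^sup>2 = (y$1)\<^sup>2 + (y$2)\<^sup>2"
  unfolding power2_norm_eq_inner by (simp add: inner_vec_def sum_2 power2_eq_square)

lemma mulv_comp: "(P *v w) $ 1 = P$1$1 * w$1 + P$1$2 * w$2" "(P *v w) $ 2 = P$2$1 * w$1 + P$2$2 * w$2"
  for P :: "real^2^2"
  by (simp_all add: matrix_vector_mult_def sum_2)

lemma opnorm_bounds:
  fixes P :: "real^2^2" and p q r :: real
  assumes e: "P$1$1 = p" "P$1$2 = q" "P$2$1 = q" "P$2$2 = r"
    and p: "p > 0" and r: "r > 0" and D: "p * r - q\<^sup>2 > 0"
  shows "p \<le> mat_opnorm P" "r \<le> mat_opnorm P" "mat_opnorm P \<le> p + r"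
proof -
  have bl: "bounded_linear (\<lambda>w. P *v w)" by simp
  have "\<bar>(P *v axis i 1) $ i\<bar> \<le> norm (P *v axis i 1)" for i by (rule component_le_norm_cart)
  also have "norm (P *v axis i 1) \<le> mat_opnorm P * norm (axis i (1::real) :: real^2)" for i
    unfolding mat_opnorm_def using onorm[OF bl] by blast
  finally have h: "\<bar>(P *v axis i 1) $ i\<bar> \<le> mat_opnorm P" for i by simp
  show "p \<le> mat_opnorm P" using h[of 1] e by (simp add: mulv_comp axis_def)
  show "r \<le> mat_opnorm P" using h[of 2] e by (simp add: mulv_comp axis_def)
  show "mat_opnorm P \<le> p + r"
    unfolding mat_opnorm_def
  proof (rule onorm_le)
    fix w :: "real^2"
    define w1 w2 where "w1 = w$1" and "w2 = w$2"
    define Q where "Q = p*w1\<^sup>2 + 2*q*w1*w2 + r*w2\<^sup>2"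
    define T where "T = w1\<^sup>2 + w2\<^sup>2"
    define \<Delta> where "\<Delta> = p*r - q\<^sup>2"
    have n1: "(norm (P *v w))\<^sup>2 = (p*w1 + q*w2)\<^sup>2 + (q*w1 + r*w2)\<^sup>2"
      by (simp add: norm2_vec mulv_comp e w1_def w2_def)
    have n2: "(norm w)\<^sup>2 = T" by (simp add: norm2_vec T_def w1_def w2_def)
    have ch: "(p*w1 + q*w2)\<^sup>2 + (q*w1 + r*w2)\<^sup>2 = (p + r) * Q - \<Delta> * T"
      by (simp add: Q_def T_def \<Delta>_def power2_eq_square algebra_simps)
    have Q': "r * ((p + r) * T - Q) = (r*w1 - q*w2)\<^sup>2 + \<Delta> * w2\<^sup>2"
      by (simp add: Q_def T_def \<Delta>_def power2_eq_square algebra_simps)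
    have Dpos: "\<Delta> > 0" using D by (simp add: \<Delta>_def)
    have "r * ((p + r) * T - Q) \<ge> 0" unfolding Q' using Dpos by simp
    then have QT: "Q \<le> (p + r) * T" using r by (simp add: zero_le_mult_iff)
    have T0: "T \<ge> 0" by (simp add: T_def)
    have "(norm (P *v w))\<^sup>2 \<le> (p + r) * Q" unfolding n1 ch using Dpos T0 by simp
    also have "\<dots> \<le> (p + r) * ((p + r) * T)" using QT p r by (simp add: mult_left_mono)
    also have "\<dots> = ((p + r) * norm w)\<^sup>2" unfolding power_mult_distrib n2 by (simp add: power2_eq_square)
    finally show "norm (P *v w) \<le> (p + r) * norm w"
      by (rule power2_le_imp_le) (use p r in simp)
  qed
qed


theorem lemma4p2:
  fixes \<alpha> :: real
  assumes "\<alpha> \<notin> \<rat>"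
  shows "\<exists>C>0. \<forall>(v :: real \<Rightarrow> real) (x :: real) (E :: real) (k :: nat) (\<epsilon> :: real).
           real_analytic v \<and> periodic1 v \<and> k \<ge> 1 \<and> \<epsilon> > 0 \<and>
           det (Pk v E \<alpha> x k) = 1 / (4 * \<epsilon>\<^sup>2) \<longrightarrow>
           1 / C < psi (m_plus v \<alpha> x (Complex E \<epsilon>)) / (2 * \<epsilon> * mat_opnorm (Pk v E \<alpha> x k))
           \<and> psi (m_plus v \<alpha> x (Complex E \<epsilon>)) / (2 * \<epsilon> * mat_opnorm (Pk v E \<alpha> x k)) < C"
proof (intro exI[of _ "10::real"] conjI allI impI)
  show "(0::real) < 10" by simp
  fix v x E k \<epsilon>
  assume H: "real_analytic v \<and> periodic1 v \<and> k \<ge> 1 \<and> \<epsilon> > 0 \<and> det (Pk v E \<alpha> x k) = 1 / (4 * \<epsilon>\<^sup>2)"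
  then have k: "k \<ge> 1" and e: "\<epsilon> > 0" and dt: "det (Pk v E \<alpha> x k) = 1 / (4 * \<epsilon>\<^sup>2)" by auto
  define c where "c = (\<lambda>j. E - v (x + real j * \<alpha>))"
  define \<phi> where "\<phi> = rsol c 0 1"
  define \<theta> where "\<theta> = rsol c 1 0"
  define L where "L = 2 * k"
  define p where "p = (\<Sum>n\<in>{1..L}. \<phi> n * \<phi> n)"
  define q where "q = (\<Sum>n\<in>{1..L}. \<phi> n * \<theta> n)"
  define r where "r = (\<Sum>n\<in>{1..L}. \<theta> n * \<theta> n)"
  define P where "P = Pk v E \<alpha> x k"
  define m where "m = m_plus v \<alpha> x (Complex E \<epsilon>)"
  have PE: "P$1$1 = p" "P$1$2 = q" "P$2$1 = q" "P$2$2 = r"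
    using Pk_entries[of v E \<alpha> x k]
    by (simp_all add: P_def p_def q_def r_def L_def \<phi>_def \<theta>_def c_def phiE_def thetaE_def)
  have detP: "det P = p * r - q\<^sup>2" by (simp add: det_2 PE power2_eq_square)
  have D4: "4 * \<epsilon>\<^sup>2 * (p * r - q\<^sup>2) = 1" using dt e by (simp add: P_def[symmetric] detP field_simps)
  have D: "p * r - q\<^sup>2 > 0"
  proof -
    have "p * r - q\<^sup>2 = 1 / (4 * \<epsilon>\<^sup>2)" using dt by (simp add: P_def[symmetric] detP)
    then show ?thesis using e by simp
  qed
  have pp: "p > 0"
  proof -
    have "\<phi> 1 * \<phi> 1 \<le> p" unfolding p_def
      by (rule member_le_sum) (use k in \<open>auto simp: L_def\<close>)
    then show ?thesis by (simp add: \<phi>_def)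
  qed
  have rp: "r > 0"
  proof -
    have "\<theta> 2 * \<theta> 2 \<le> r" unfolding r_def
      by (rule member_le_sum) (use k in \<open>auto simp: L_def\<close>)
    moreover have "\<theta> 2 = -1" by (simp add: \<theta>_def numeral_2_eq_2)
    ultimately show ?thesis by simp
  qed
  have N: "p \<le> mat_opnorm P" "r \<le> mat_opnorm P" "mat_opnorm P \<le> p + r"
    using opnorm_bounds[OF PE pp rp D] by auto
  define u where "u = rsol (\<lambda>n. complex_of_real (c n) + \<i> * complex_of_real \<epsilon>) 1 (-m)"
  have ceq: "(\<lambda>n. Complex E \<epsilon> - of_real (v (x + real n * \<alpha>))) = (\<lambda>n. complex_of_real (c n) + \<i> * complex_of_real \<epsilon>)"
    by (simp add: fun_eq_iff complex_eq_iff c_def)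
  have good: "\<epsilon> * (\<Sum>n\<in>{1..L}. (cmod (u n))\<^sup>2) \<le> Im m"
    using m_plus_good[OF e, of E v x \<alpha> L] unfolding ceq by (simp add: u_def m_def)
  have estv: "(cmod m)\<^sup>2 * p - 2 * Re m * q + r \<le> 9/4 * (\<Sum>n\<in>{1..L}. (cmod (u n))\<^sup>2)"
    unfolding p_def q_def r_def \<phi>_def \<theta>_def u_def
    by (rule est[OF e]) (use D4 in \<open>simp add: p_def q_def r_def \<phi>_def \<theta>_def field_simps\<close>)
  have X: "(cmod m)\<^sup>2 * p - 2 * Re m * q + r \<le> 9 / (4 * \<epsilon>) * Im m"
  proof -
    have "(\<Sum>n\<in>{1..L}. (cmod (u n))\<^sup>2) \<le> Im m / \<epsilon>" using good e by (simp add: field_simps mult.commute)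
    then have "9/4 * (\<Sum>n\<in>{1..L}. (cmod (u n))\<^sup>2) \<le> 9/4 * (Im m / \<epsilon>)" by simp
    also have "9/4 * (Im m / \<epsilon>) = 9 / (4 * \<epsilon>) * Im m" by simp
    finally show ?thesis using estv by linarith
  qed
  have fin: "1/10 < psi m / (2 * \<epsilon> * mat_opnorm P) \<and> psi m / (2 * \<epsilon> * mat_opnorm P) < 10"
    by (rule final_alg[OF pp rp e D4 X N])
  show "1 / 10 < psi (m_plus v \<alpha> x (Complex E \<epsilon>)) / (2 * \<epsilon> * mat_opnorm (Pk v E \<alpha> x k))"
    using fin by (simp add: m_def P_def)
  show "psi (m_plus v \<alpha> x (Complex E \<epsilon>)) / (2 * \<epsilon> * mat_opnorm (Pk v E \<alpha> x k)) < 10"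
    using fin by (simp add: m_def P_def)
qed

end
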